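(* Let $\mathbb{X}=[-1,1]$ with prior $\zeta$ the uniform distribution, $\mathbb{Y}^1=\{1,2,3\}$, $\mathbb{Y}^2=\{0\}$, $\mathbb{U}^1=\mathbb{U}^2=[-1,1]$. For $m\ge1$ let $\mu_m$ be the information structure in which $y^2=0$ always and $y^1=1$ if $x\in[-1,-\tfrac12-\tfrac1{8m})$, $y^1=2$ if $x\in[-\tfrac12-\tfrac1{8m},\tfrac12+\tfrac1{4m}]$, $y^1=3$ if $x\in(\tfrac12+\tfrac1{4m},1]$; let $\mu$ be the information structure with $y^2=0$ always and $y^1=1,2,3$ according as $x\in[-1,-\tfrac12)$, $[-\tfrac12,\tfrac12]$, $(\tfrac12,1]$. Consider the two-player non-zero-sum game with costs $$c^1(x,u^1,u^2)=(x-u^1)^2-(u^2)^2,\qquad c^2(x,u^1,u^2)=\begin{cases}(u^2)^2,&u^1=0,\\(u^2-1)^2,&u^1\ne0.\end{cases}$$ Then $\|\mu_m-\mu\|_{TV}\to0$; for every $m$, in every Nash equilibrium under $\mu_m$ Player 2's expected cost is $0$, whereas in every Nash equilibrium under $\mu$ Player 2's expected cost is $1/4$. Hence, in general non-zero-sum games with bounded measurable costs, a player's equilibrium cost need not be continuous under total variation convergence of information structures.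
   Context: An information structure is the joint law of $(x,y^1,y^2)$ on $\mathbb{X}\times\mathbb{Y}^1\times\mathbb{Y}^2$. Player $i$ chooses a measurable policy $\gamma^i:\mathbb{Y}^i\to\mathbb{U}^i$ and incurs expected cost $J^i(\mu,\gamma^1,\gamma^2)=E^\mu[c^i(x,\gamma^1(y^1),\gamma^2(y^2))]$, which each player seeks to minimize. A Nash equilibrium is a pair $(\gamma^{1,*},\gamma^{2,*})$ such that $J^1(\mu,\gamma^{1,*},\gamma^{2,*})\le J^1(\mu,\gamma^1,\gamma^{2,*})$ and $J^2(\mu,\gamma^{1,*},\gamma^{2,*})\le J^2(\mu,\gamma^{1,*},\gamma^2)$ for all policies $\gamma^1,\gamma^2$. $\|\mu-\nu\|_{TV}=2\sup_B|\mu(B)-\nu(B)|$. *)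

theory Defs
  imports "HOL-Probability.Probability"
begin

text \<open>Measurable space of (x, y1, y2): X = [-1,1] embedded in the reals (Borel),
  Y1 = {1,2,3} and Y2 = {0} embedded in nat with the discrete sigma-algebra.\<close>
definition IS_space :: "(real \<times> nat \<times> nat) measure" where
  "IS_space = borel \<Otimes>\<^sub>M (count_space UNIV \<Otimes>\<^sub>M count_space UNIV)"

definition zeta :: "real measure" where
  "zeta = uniform_measure lborel {-1..1}"

definition info_struct :: "(real \<Rightarrow> nat) \<Rightarrow> (real \<Rightarrow> nat) \<Rightarrow> (real \<times> nat \<times> nat) measure" where
  "info_struct f1 f2 = distr zeta IS_space (\<lambda>x. (x, f1 x, f2 x))"

definition sig_m :: "nat \<Rightarrow> real \<Rightarrow> nat" where
  "sig_m m x = (if x < -1/2 - 1/(8 * real m) then 1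
               else if x \<le> 1/2 + 1/(4 * real m) then 2 else 3)"

definition sig :: "real \<Rightarrow> nat" where
  "sig x = (if x < -1/2 then 1 else if x \<le> 1/2 then 2 else 3)"

definition mu_m :: "nat \<Rightarrow> (real \<times> nat \<times> nat) measure" where
  "mu_m m = info_struct (sig_m m) (\<lambda>_. 0)"

definition mu :: "(real \<times> nat \<times> nat) measure" where
  "mu = info_struct sig (\<lambda>_. 0)"

definition tv_dist :: "'a measure \<Rightarrow> 'a measure \<Rightarrow> real" where
  "tv_dist M N = 2 * (SUP B \<in> sets M. \<bar>measure M B - measure N B\<bar>)"

definition Y1 :: "nat set" where "Y1 = {1,2,3}"
definition Y2 :: "nat set" where "Y2 = {0}"
definition U :: "real set" where "U = {-1..1}"

text \<open>Policies Y^i -> U^i (values outside Y^i are irrelevant; every map on a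
  discrete finite set is measurable).\<close>
definition policies :: "nat set \<Rightarrow> (nat \<Rightarrow> real) set" where
  "policies Y = {g. \<forall>y\<in>Y. g y \<in> U}"

definition cost1 :: "real \<Rightarrow> real \<Rightarrow> real \<Rightarrow> real" where
  "cost1 x u1 u2 = (x - u1)^2 - u2^2"

definition cost2 :: "real \<Rightarrow> real \<Rightarrow> real \<Rightarrow> real" where
  "cost2 x u1 u2 = (if u1 = 0 then u2^2 else (u2 - 1)^2)"

definition J :: "(real \<times> nat \<times> nat) measure \<Rightarrow> (real \<Rightarrow> real \<Rightarrow> real \<Rightarrow> real)
    \<Rightarrow> (nat \<Rightarrow> real) \<Rightarrow> (nat \<Rightarrow> real) \<Rightarrow> real" where
  "J M c g1 g2 = (\<integral>\<omega>. c (fst \<omega>) (g1 (fst (snd \<omega>))) (g2 (snd (snd \<omega>))) \<partial>M)"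

definition nash :: "(real \<times> nat \<times> nat) measure \<Rightarrow> (nat \<Rightarrow> real) \<Rightarrow> (nat \<Rightarrow> real) \<Rightarrow> bool" where
  "nash M g1 g2 \<longleftrightarrow> g1 \<in> policies Y1 \<and> g2 \<in> policies Y2 \<and>
     (\<forall>h \<in> policies Y1. J M cost1 g1 g2 \<le> J M cost1 h g2) \<and>
     (\<forall>h \<in> policies Y2. J M cost2 g1 g2 \<le> J M cost2 g1 h)"

end

theory Submission
  imports Defs
begin


definition thr :: "real \<Rightarrow> real \<Rightarrow> real \<Rightarrow> nat" where
  "thr a b x = (if x < a then 1 else if x \<le> b then 2 else 3)"

lemma sets_zeta[measurable_cong]: "sets zeta = sets borel"
  by (simp add: zeta_def)

lemma thr_meas[measurable]: "thr a b \<in> borel \<rightarrow>\<^sub>M count_space UNIV"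
  unfolding thr_def by measurable

lemma IS_eq: "IS_space = borel \<Otimes>\<^sub>M count_space UNIV"
  unfolding IS_space_def by (simp add: pair_measure_countable)

lemma T_meas: "(\<lambda>x. (x, thr a b x, 0::nat)) \<in> zeta \<rightarrow>\<^sub>M IS_space"
  unfolding IS_space_def by measurable

lemma cost_meas:
  fixes g1 g2 :: "nat \<Rightarrow> real"
  shows "(\<lambda>\<omega>. cost1 (fst \<omega>) (g1 (fst (snd \<omega>))) (g2 (snd (snd \<omega>)))) \<in> borel_measurable IS_space"
    and "(\<lambda>\<omega>. cost2 (fst \<omega>) (g1 (fst (snd \<omega>))) (g2 (snd (snd \<omega>)))) \<in> borel_measurable IS_space"
proof -
  have G: "(\<lambda>\<omega>. G (snd \<omega>)) \<in> borel_measurable IS_space" for G :: "nat \<times> nat \<Rightarrow> real"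
    unfolding IS_eq by (rule measurable_compose[OF measurable_snd]) simp
  have [measurable]: "(\<lambda>\<omega>. g1 (fst (snd \<omega>))) \<in> borel_measurable IS_space"
     "(\<lambda>\<omega>. g2 (snd (snd \<omega>))) \<in> borel_measurable IS_space"
    using G[of "\<lambda>p. g1 (fst p)"] G[of "\<lambda>p. g2 (snd p)"] by auto
  have [measurable]: "fst \<in> borel_measurable IS_space"
    unfolding IS_eq by (rule measurable_fst)
  show "(\<lambda>\<omega>. cost1 (fst \<omega>) (g1 (fst (snd \<omega>))) (g2 (snd (snd \<omega>)))) \<in> borel_measurable IS_space"
    unfolding cost1_def by measurable
  show "(\<lambda>\<omega>. cost2 (fst \<omega>) (g1 (fst (snd \<omega>))) (g2 (snd (snd \<omega>)))) \<in> borel_measurable IS_space"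
    using G[of "\<lambda>p. cost2 0 (g1 (fst p)) (g2 (snd p))"] by (simp add: cost2_def)
qed

lemma zeta_dens: "zeta = density lborel (\<lambda>x. ennreal (indicator {-1..1} x / 2))"
  unfolding zeta_def uniform_measure_def
  by (intro arg_cong[where f="density lborel"] ext) (auto split: split_indicator simp: divide_ennreal divide_ennreal_def)

lemma int_zeta:
  fixes f :: "real \<Rightarrow> real"
  assumes "f \<in> borel_measurable borel"
  shows "integral\<^sup>L zeta f = (\<integral>x. f x * indicator {-1..1} x \<partial>lborel) / 2"
proof -
  have "integral\<^sup>L zeta f = (\<integral>x. (indicator {-1..1} x / 2) *\<^sub>R f x \<partial>lborel)"
    unfolding zeta_dens using assms by (subst integral_density) auto
  also have "\<dots> = (\<integral>x. f x * indicator {-1..1} x / 2 \<partial>lborel)"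
    by (simp add: mult.commute)
  finally show ?thesis by simp
qed


lemma step:
  fixes F :: "nat \<Rightarrow> real \<Rightarrow> real"
  assumes ab: "-1 < a" "a \<le> b" "b < 1" and cont: "\<And>k x. isCont (F k) x"
  shows "(\<integral>x. F (thr a b x) x \<partial>zeta) = ((\<integral>x. F 1 x * indicator {-1..a} x \<partial>lborel)
     + (\<integral>x. F 2 x * indicator {a..b} x \<partial>lborel) + (\<integral>x. F 3 x * indicator {b..1} x \<partial>lborel)) / 2"
proof -
  have [measurable]: "F k \<in> borel_measurable borel" for k
    by (rule borel_measurable_continuous_onI) (simp add: cont continuous_at_imp_continuous_on)
  have eq: "(\<lambda>x. F (thr a b x) x) = (\<lambda>x. if x < a then F 1 x else if x \<le> b then F 2 x else F 3 x)"
    by (auto simp: thr_def)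
  have m: "(\<lambda>x. F (thr a b x) x) \<in> borel_measurable borel"
    unfolding eq by measurable
  have i: "integrable lborel (\<lambda>x. F k x * indicator {p..q} x)" for k p q
    by (rule borel_integrable_atLeastAtMost) (simp add: cont)
  have "(\<integral>x. F (thr a b x) x * indicator {-1..1} x \<partial>lborel) =
     (\<integral>x. F 1 x * indicator {-1..a} x + F 2 x * indicator {a..b} x + F 3 x * indicator {b..1} x \<partial>lborel)"
  proof (rule integral_cong_AE)
    show "AE x in lborel. F (thr a b x) x * indicator {-1..1} x =
      F 1 x * indicator {-1..a} x + F 2 x * indicator {a..b} x + F 3 x * indicator {b..1} x"
      using AE_lborel_singleton[of a] AE_lborel_singleton[of b]
    proof eventually_elim
      case (elim x)
      then show ?case using ab by (auto simp: thr_def split: split_indicator)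
    qed
  qed (use m in auto)
  also have "\<dots> = (\<integral>x. F 1 x * indicator {-1..a} x \<partial>lborel)
     + (\<integral>x. F 2 x * indicator {a..b} x \<partial>lborel) + (\<integral>x. F 3 x * indicator {b..1} x \<partial>lborel)"
    using i by simp
  finally show ?thesis using int_zeta[OF m] by simp
qed

lemma J_thr:
  "J (info_struct (thr a b) (\<lambda>_. 0)) cost1 g1 g2 = (\<integral>x. cost1 x (g1 (thr a b x)) (g2 0) \<partial>zeta)"
  "J (info_struct (thr a b) (\<lambda>_. 0)) cost2 g1 g2 = (\<integral>x. cost2 x (g1 (thr a b x)) (g2 0) \<partial>zeta)"
  unfolding J_def info_struct_def
  by (subst integral_distr[OF T_meas cost_meas(1)], simp)
     (subst integral_distr[OF T_meas cost_meas(2)], simp)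

definition Q :: "real \<Rightarrow> real \<Rightarrow> real \<Rightarrow> real" where
  "Q p q g = ((q - g)^3 - (p - g)^3) / 3"

lemma int_c1: "p \<le> q \<Longrightarrow> (\<integral>x. cost1 x g u * indicator {p..q} x \<partial>lborel) = Q p q g - u^2 * (q - p)"
proof -
  assume pq: "p \<le> q"
  have "(\<integral>x. cost1 x g u * indicator {p..q} x \<partial>lborel) =
     ((q - g)^3/3 - u^2 * q) - ((p - g)^3/3 - u^2 * p)"
    unfolding cost1_def
    by (rule integral_FTC_Icc_real[OF pq, where F="\<lambda>x. (x - g)^3/3 - u^2 * x"])
       (auto intro!: derivative_eq_intros simp: power2_eq_square)
  then show ?thesis unfolding Q_def by (simp add: diff_divide_distrib algebra_simps)
qed

lemma int_const: "p \<le> q \<Longrightarrow> (\<integral>x. (c::real) * indicator {p..q} x \<partial>lborel) = c * (q - p)"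
proof -
  assume pq: "p \<le> q"
  have "(\<integral>x. (\<lambda>_. c) x * indicator {p..q} x \<partial>lborel) = c * q - c * p"
    by (rule integral_FTC_Icc_real[OF pq, where F="\<lambda>x. c * x"])
       (auto intro!: derivative_eq_intros)
  then show ?thesis by (simp add: algebra_simps)
qed

lemma J1_formula:
  assumes ab: "-1 < a" "a \<le> b" "b < 1"
  shows "J (info_struct (thr a b) (\<lambda>_. 0)) cost1 g1 g2 =
    (Q (-1) a (g1 1) + Q a b (g1 2) + Q b 1 (g1 3)) / 2 - (g2 0)^2"
proof -
  have "J (info_struct (thr a b) (\<lambda>_. 0)) cost1 g1 g2 = (\<integral>x. (\<lambda>k x. cost1 x (g1 k) (g2 0)) (thr a b x) x \<partial>zeta)"
    by (simp add: J_thr)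
  also have "\<dots> = ((Q (-1) a (g1 1) - (g2 0)^2 * (a - -1)) + (Q a b (g1 2) - (g2 0)^2 * (b - a))
      + (Q b 1 (g1 3) - (g2 0)^2 * (1 - b))) / 2"
    by (subst step[OF ab]) (use ab in \<open>auto simp: cost1_def int_c1[unfolded cost1_def]\<close>)
  finally show ?thesis by (simp add: algebra_simps)
qed

lemma J2_formula:
  assumes ab: "-1 < a" "a \<le> b" "b < 1"
  shows "J (info_struct (thr a b) (\<lambda>_. 0)) cost2 g1 g2 =
    ((a + 1) * cost2 0 (g1 1) (g2 0) + (b - a) * cost2 0 (g1 2) (g2 0) + (1 - b) * cost2 0 (g1 3) (g2 0)) / 2"
proof -
  have "J (info_struct (thr a b) (\<lambda>_. 0)) cost2 g1 g2 = (\<integral>x. (\<lambda>k x. cost2 0 (g1 k) (g2 0)) (thr a b x) x \<partial>zeta)"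
    by (simp add: J_thr cost2_def)
  also have "\<dots> = ((a + 1) * cost2 0 (g1 1) (g2 0) + (b - a) * cost2 0 (g1 2) (g2 0) + (1 - b) * cost2 0 (g1 3) (g2 0)) / 2"
    by (subst step[OF ab]) (use ab in \<open>auto simp: int_const\<close>)
  finally show ?thesis .
qed

lemma Q_id: "Q p q g = Q p q ((p+q)/2) + (q - p) * (g - (p+q)/2)^2"
  unfolding Q_def power2_eq_square power3_eq_cube by (simp add: field_simps algebra_simps)


lemma sig_m_eq: "sig_m m = thr (-1/2 - 1/(8 * real m)) (1/2 + 1/(4 * real m))"
  by (simp add: fun_eq_iff sig_m_def thr_def)

lemma sig_eq: "sig = thr (-1/2) (1/2)"
  by (simp add: fun_eq_iff sig_def thr_def)

lemma zeta_prob: "prob_space zeta"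
  unfolding zeta_def by (rule prob_space_uniform_measure) auto

lemma measure_zeta_Icc: "-1 \<le> p \<Longrightarrow> p \<le> q \<Longrightarrow> q \<le> 1 \<Longrightarrow> measure zeta {p..q} = (q - p) / 2"
  unfolding zeta_def
  by (subst measure_uniform_measure) (auto simp: Int_absorb1)

lemma tv_bound:
  assumes m: "m \<ge> 1"
  shows "0 \<le> tv_dist (mu_m m) mu \<and> tv_dist (mu_m m) mu \<le> 3 / (8 * real m)"
proof -
  interpret Z: prob_space zeta by (rule zeta_prob)
  define d where "d = 1 / (8 * real m)"
  have d: "0 < d" "d \<le> 1/8" using m by (auto simp: d_def field_simps)
  define E where "E = {-1/2 - d .. -1/2} \<union> {1/2 .. 1/2 + 2*d}"
  have E: "E \<in> sets zeta" unfolding E_def by simp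
  have mE: "measure zeta E \<le> 3 * d / 2"
  proof -
    have "measure zeta E \<le> measure zeta {-1/2 - d .. -1/2} + measure zeta {1/2 .. 1/2 + 2*d}"
      unfolding E_def by (rule measure_Un_le) auto
    also have "\<dots> = 3 * d / 2" using d by (simp add: measure_zeta_Icc)
    finally show ?thesis .
  qed
  have sm: "sig_m m = thr (-1/2 - d) (1/2 + 2 * d)" unfolding sig_m_eq d_def by simp
  have agree: "x \<notin> E \<Longrightarrow> sig_m m x = sig x" for x
    using d unfolding E_def sm sig_eq thr_def by auto
  let ?T1 = "\<lambda>x. (x, sig_m m x, 0::nat)" and ?T2 = "\<lambda>x. (x, sig x, 0::nat)"
  have T1: "?T1 \<in> zeta \<rightarrow>\<^sub>M IS_space" unfolding sm by (rule T_meas)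
  have T2: "?T2 \<in> zeta \<rightarrow>\<^sub>M IS_space" unfolding sig_eq by (rule T_meas)
  have bnd: "\<bar>measure (mu_m m) B - measure mu B\<bar> \<le> 3 * d / 2" if B: "B \<in> sets (mu_m m)" for B
  proof -
    have B': "B \<in> sets IS_space" using B by (simp add: mu_m_def info_struct_def)
    define A1 where "A1 = ?T1 -` B \<inter> space zeta"
    define A2 where "A2 = ?T2 -` B \<inter> space zeta"
    have A: "A1 \<in> sets zeta" "A2 \<in> sets zeta"
      unfolding A1_def A2_def using T1 T2 B' by (auto intro: measurable_sets)
    have e1: "measure (mu_m m) B = measure zeta A1"
      unfolding mu_m_def info_struct_def A1_def by (rule measure_distr[OF T1 B'])
    have e2: "measure mu B = measure zeta A2"
      unfolding mu_def info_struct_def A2_def by (rule measure_distr[OF T2 B'])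
    have s1: "A1 \<subseteq> A2 \<union> E" and s2: "A2 \<subseteq> A1 \<union> E"
      unfolding A1_def A2_def using agree by auto
    have "measure zeta A1 \<le> measure zeta (A2 \<union> E)" using s1 A E by (intro Z.finite_measure_mono) auto
    also have "\<dots> \<le> measure zeta A2 + measure zeta E" using A E by (intro measure_Un_le) auto
    finally have 1: "measure zeta A1 \<le> measure zeta A2 + measure zeta E" .
    have "measure zeta A2 \<le> measure zeta (A1 \<union> E)" using s2 A E by (intro Z.finite_measure_mono) auto
    also have "\<dots> \<le> measure zeta A1 + measure zeta E" using A E by (intro measure_Un_le) auto
    finally have 2: "measure zeta A2 \<le> measure zeta A1 + measure zeta E" .
    show ?thesis unfolding e1 e2 using 1 2 mE by linarith
  qed
  have ne: "sets (mu_m m) \<noteq> {}" using sets.empty_sets by blast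
  have le: "(SUP B \<in> sets (mu_m m). \<bar>measure (mu_m m) B - measure mu B\<bar>) \<le> 3 * d / 2"
    by (rule cSUP_least[OF ne bnd])
  have bdd: "bdd_above ((\<lambda>B. \<bar>measure (mu_m m) B - measure mu B\<bar>) ` sets (mu_m m))"
    using bnd by (intro bdd_aboveI2) 
  have ge: "0 \<le> (SUP B \<in> sets (mu_m m). \<bar>measure (mu_m m) B - measure mu B\<bar>)"
    by (rule cSUP_upper2[OF bdd sets.empty_sets]) simp
  show ?thesis using le ge unfolding tv_dist_def d_def by (auto simp: field_simps)
qed

lemma tv_lim: "(\<lambda>m. tv_dist (mu_m m) mu) \<longlonglongrightarrow> 0"
proof (rule tendsto_sandwich[where f="\<lambda>_. 0" and h="\<lambda>m. (3/8) / real m"])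
  show "\<forall>\<^sub>F n in sequentially. 0 \<le> tv_dist (mu_m n) mu"
    using eventually_ge_at_top[of "1::nat"] by eventually_elim (use tv_bound in auto)
  show "\<forall>\<^sub>F n in sequentially. tv_dist (mu_m n) mu \<le> (3/8) / real n"
    using eventually_ge_at_top[of "1::nat"] by eventually_elim (use tv_bound in auto)
  show "(\<lambda>m. (3/8) / real m) \<longlonglongrightarrow> 0" by (rule lim_const_over_n)
qed simp


definition br :: "real \<Rightarrow> real \<Rightarrow> nat \<Rightarrow> real" where
  "br a b k = (if k = 1 then (-1 + a)/2 else if k = 2 then (a + b)/2 else (b + 1)/2)"

lemma J1_dev:
  assumes ab: "-1 < a" "a \<le> b" "b < 1"
  shows "J (info_struct (thr a b) (\<lambda>_. 0)) cost1 h g2 =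
    (Q (-1) a ((-1 + a)/2) + Q a b ((a+b)/2) + Q b 1 ((b+1)/2)) / 2
    + ((a + 1) * (h 1 - br a b 1)^2 + (b - a) * (h 2 - br a b 2)^2 + (1 - b) * (h 3 - br a b 3)^2) / 2
    - (g2 0)^2"
  unfolding J1_formula[OF ab] Q_id[of "-1" a "h 1"] Q_id[of a b "h 2"] Q_id[of b 1 "h 3"]
  by (simp add: br_def field_simps)

lemma br_pol: "-1 < a \<Longrightarrow> a \<le> b \<Longrightarrow> b < 1 \<Longrightarrow> br a b \<in> policies Y1"
  by (auto simp: policies_def Y1_def U_def br_def)

lemma br_iff:
  assumes ab: "-1 < a" "a < b" "b < 1"
  shows "(\<forall>h\<in>policies Y1. J (info_struct (thr a b) (\<lambda>_. 0)) cost1 g1 g2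
            \<le> J (info_struct (thr a b) (\<lambda>_. 0)) cost1 h g2)
     \<longleftrightarrow> (g1 1 = br a b 1 \<and> g1 2 = br a b 2 \<and> g1 3 = br a b 3)"
proof
  assume H: "\<forall>h\<in>policies Y1. J (info_struct (thr a b) (\<lambda>_. 0)) cost1 g1 g2
            \<le> J (info_struct (thr a b) (\<lambda>_. 0)) cost1 h g2"
  have "J (info_struct (thr a b) (\<lambda>_. 0)) cost1 g1 g2 \<le> J (info_struct (thr a b) (\<lambda>_. 0)) cost1 (br a b) g2"
    using H br_pol[of a b] ab by auto
  then have le: "(a + 1) * (g1 1 - br a b 1)^2 + (b - a) * (g1 2 - br a b 2)^2 + (1 - b) * (g1 3 - br a b 3)^2 \<le> 0"
    unfolding J1_dev[OF ab(1) less_imp_le[OF ab(2)] ab(3)] by simp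
  have n1: "0 \<le> (a + 1) * (g1 1 - br a b 1)^2" "0 \<le> (b - a) * (g1 2 - br a b 2)^2" "0 \<le> (1 - b) * (g1 3 - br a b 3)^2"
    using ab by auto
  have "(a + 1) * (g1 1 - br a b 1)^2 = 0" "(b - a) * (g1 2 - br a b 2)^2 = 0" "(1 - b) * (g1 3 - br a b 3)^2 = 0"
    using le n1 by linarith+
  then show "g1 1 = br a b 1 \<and> g1 2 = br a b 2 \<and> g1 3 = br a b 3" using ab by auto
next
  assume "g1 1 = br a b 1 \<and> g1 2 = br a b 2 \<and> g1 3 = br a b 3"
  then show "\<forall>h\<in>policies Y1. J (info_struct (thr a b) (\<lambda>_. 0)) cost1 g1 g2
            \<le> J (info_struct (thr a b) (\<lambda>_. 0)) cost1 h g2"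
    unfolding J1_dev[OF ab(1) less_imp_le[OF ab(2)] ab(3)] using ab by auto
qed

lemma J2_br:
  assumes ab: "-1 < a" "a \<le> b" "b < 1" and g: "g1 1 = br a b 1" "g1 2 = br a b 2" "g1 3 = br a b 3"
  shows "J (info_struct (thr a b) (\<lambda>_. 0)) cost2 g1 g2 =
    ((a + 1) * cost2 0 (br a b 1) (g2 0) + (b - a) * cost2 0 (br a b 2) (g2 0) + (1 - b) * cost2 0 (br a b 3) (g2 0)) / 2"
  unfolding J2_formula[OF ab] g ..

lemma nash_thr:
  assumes ab: "-1 < a" "a < b" "b < 1"
  shows "nash (info_struct (thr a b) (\<lambda>_. 0)) g1 g2 \<longleftrightarrow>
    g1 \<in> policies Y1 \<and> g2 \<in> policies Y2 \<and> (g1 1 = br a b 1 \<and> g1 2 = br a b 2 \<and> g1 3 = br a b 3)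
    \<and> (\<forall>h\<in>policies Y2. J (info_struct (thr a b) (\<lambda>_. 0)) cost2 g1 g2 \<le> J (info_struct (thr a b) (\<lambda>_. 0)) cost2 g1 h)"
  unfolding nash_def br_iff[OF ab] by blast

lemma pol2: "policies Y2 = {g. g 0 \<in> U}" by (simp add: policies_def Y2_def)

lemma part_m:
  assumes m: "m \<ge> (1::nat)"
  shows "(\<exists>g1 g2. nash (mu_m m) g1 g2) \<and> (\<forall>g1 g2. nash (mu_m m) g1 g2 \<longrightarrow> J (mu_m m) cost2 g1 g2 = 0)"
proof -
  define d where "d = 1 / (8 * real m)"
  have d: "0 < d" "d \<le> 1/8" using m by (auto simp: d_def field_simps)
  define a where "a = -1/2 - d"
  define b where "b = 1/2 + 2 * d"
  have M: "mu_m m = info_struct (thr a b) (\<lambda>_. 0)"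
    unfolding mu_m_def sig_m_eq a_def b_def d_def by simp
  have ab: "-1 < a" "a < b" "b < 1" using d by (auto simp: a_def b_def)
  have nz: "br a b k \<noteq> 0" if "k \<in> {1,2,3}" for k
    using that d by (auto simp: br_def a_def b_def)
  have J2: "J (info_struct (thr a b) (\<lambda>_. 0)) cost2 g1 g2 = (g2 0 - 1)^2"
    if "g1 1 = br a b 1" "g1 2 = br a b 2" "g1 3 = br a b 3" for g1 g2 :: "nat \<Rightarrow> real"
    unfolding J2_br[OF ab(1) less_imp_le[OF ab(2)] ab(3) that] using nz
    by (simp add: cost2_def algebra_simps)
  have ex: "nash (mu_m m) (br a b) (\<lambda>_. 1)"
    unfolding M nash_thr[OF ab] using br_pol[of a b] ab
    by (auto simp: pol2 U_def J2)
  have all: "J (mu_m m) cost2 g1 g2 = 0" if "nash (mu_m m) g1 g2" for g1 g2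
  proof -
    have N: "g1 1 = br a b 1" "g1 2 = br a b 2" "g1 3 = br a b 3"
      and H: "\<forall>h\<in>policies Y2. J (info_struct (thr a b) (\<lambda>_. 0)) cost2 g1 g2 \<le> J (info_struct (thr a b) (\<lambda>_. 0)) cost2 g1 h"
      using that unfolding M nash_thr[OF ab] by auto
    have "(\<lambda>_. 1::real) \<in> policies Y2" by (simp add: pol2 U_def)
    with H have "(g2 0 - 1)^2 \<le> ((\<lambda>_. 1::real) 0 - 1)^2" using J2[OF N] by metis
    then have "(g2 0 - 1)^2 = 0" using zero_le_power2[of "g2 0 - 1"] by simp
    then show ?thesis unfolding M J2[OF N] .
  qed
  show ?thesis using ex all by blast
qed

lemma part_mu:
  "(\<exists>g1 g2. nash mu g1 g2) \<and> (\<forall>g1 g2. nash mu g1 g2 \<longrightarrow> J mu cost2 g1 g2 = 1/4)"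
proof -
  define a :: real where "a = -1/2"
  define b :: real where "b = 1/2"
  have M: "mu = info_struct (thr a b) (\<lambda>_. 0)"
    unfolding mu_def sig_eq a_def b_def by simp
  have ab: "-1 < a" "a < b" "b < 1" by (auto simp: a_def b_def)
  have J2: "J (info_struct (thr a b) (\<lambda>_. 0)) cost2 g1 g2 = 1/4 + (g2 0 - 1/2)^2"
    if "g1 1 = br a b 1" "g1 2 = br a b 2" "g1 3 = br a b 3" for g1 g2 :: "nat \<Rightarrow> real"
    unfolding J2_br[OF ab(1) less_imp_le[OF ab(2)] ab(3) that]
    by (simp add: cost2_def br_def a_def b_def power2_eq_square field_simps)
  have ex: "nash mu (br a b) (\<lambda>_. 1/2)"
    unfolding M nash_thr[OF ab] using br_pol[of a b] ab
    by (auto simp: pol2 U_def J2)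
  have all: "J mu cost2 g1 g2 = 1/4" if "nash mu g1 g2" for g1 g2
  proof -
    have N: "g1 1 = br a b 1" "g1 2 = br a b 2" "g1 3 = br a b 3"
      and H: "\<forall>h\<in>policies Y2. J (info_struct (thr a b) (\<lambda>_. 0)) cost2 g1 g2 \<le> J (info_struct (thr a b) (\<lambda>_. 0)) cost2 g1 h"
      using that unfolding M nash_thr[OF ab] by auto
    have "(\<lambda>_. 1/2::real) \<in> policies Y2" by (simp add: pol2 U_def)
    with H have "1/4 + (g2 0 - 1/2)^2 \<le> 1/4 + ((\<lambda>_. 1/2::real) 0 - 1/2)^2" using J2[OF N] by metis
    then have "(g2 0 - 1/2)^2 = 0" using zero_le_power2[of "g2 0 - 1/2"] by simp
    then show ?thesis unfolding M J2[OF N] by simp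
  qed
  show ?thesis using ex all by blast
qed

theorem mainTheorem11:
  shows "((\<lambda>m. tv_dist (mu_m m) mu) \<longlonglongrightarrow> 0)
    \<and> (\<forall>m\<ge>1. (\<exists>g1 g2. nash (mu_m m) g1 g2)
              \<and> (\<forall>g1 g2. nash (mu_m m) g1 g2 \<longrightarrow> J (mu_m m) cost2 g1 g2 = 0))
    \<and> (\<exists>g1 g2. nash mu g1 g2)
    \<and> (\<forall>g1 g2. nash mu g1 g2 \<longrightarrow> J mu cost2 g1 g2 = 1/4)"
  using tv_lim part_m part_mu by blast

end
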